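(* Let $a,b$ be integers with $0<b<a$, let $S=\langle a,a+1,\ldots,a+b\rangle$ with conductor $c$, and let $m\ge 2c-1$. Let $0=i_0<i_1<\cdots<i_t<i_{t+1}<a+b$ be integers such that $\{m,m+i_1,\ldots,m+i_{t+1}\}$ is amenable. Then $$\mathrm D(m,m+i_1,\ldots,m+i_{t+1})=\mathrm D(m,m+i_1,\ldots,m+i_t)\cup\{m-(ka+r)\mid a-i_{t+1}\le r\le a-1-i_t,\ 0<r-kb\le (a+b)-i_{t+1}\},$$ where $k,r$ range over integers.
   Context: The conductor $c$ of a numerical semigroup $S$ is the least element of $S$ with $c+n\in S$ for all $n\in\mathbb N$. For $x\in S$, $\mathrm D(x)=\{\alpha\in S\mid x-\alpha\in S\}$, and $\mathrm D(x_1,\ldots,x_t)=\mathrm D(x_1)\cup\cdots\cup\mathrm D(x_t)$. A set $M=\{m_1<\cdots<m_s\}\subseteq S$ with $2c-1\le m=m_1$ is amenable if $\mathrm D(m_i)\cap[m,\infty)\subseteq M$ for all $i$. *)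

theory Defs
  imports Main
begin

inductive_set semigroup_gen :: "int set \<Rightarrow> int set" for G :: "int set" where
  zero: "0 \<in> semigroup_gen G"
| add: "g \<in> G \<Longrightarrow> x \<in> semigroup_gen G \<Longrightarrow> g + x \<in> semigroup_gen G"

definition conductor :: "int set \<Rightarrow> int" where
  "conductor S = (LEAST c. c \<in> S \<and> (\<forall>n::nat. c + int n \<in> S))"

definition Dv :: "int set \<Rightarrow> int \<Rightarrow> int set" where
  "Dv S x = {\<alpha>. \<alpha> \<in> S \<and> x - \<alpha> \<in> S}"

definition Dset :: "int set \<Rightarrow> int set \<Rightarrow> int set" where
  "Dset S X = (\<Union>x\<in>X. Dv S x)"

definition amenable :: "int set \<Rightarrow> int set \<Rightarrow> bool" where
  "amenable S M \<longleftrightarrow> finite M \<and> M \<noteq> {} \<and> M \<subseteq> S \<and> 2 * conductor S - 1 \<le> Min M \<and>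
     (\<forall>x\<in>M. Dv S x \<inter> {Min M..} \<subseteq> M)"

end

theory Submission
  imports Defs
begin

lemma S_in:
  fixes a b n x :: int
  assumes "0 \<le> a" "0 \<le> b" "n*a \<le> x" "x \<le> n*(a+b)" "0 \<le> n"
  shows "x \<in> semigroup_gen {a..a+b}"
proof -
  have "\<forall>x. int N * a \<le> x \<and> x \<le> int N * (a+b) \<longrightarrow> x \<in> semigroup_gen {a..a+b}" for N
  proof (induction N)
    case 0 then show ?case by (auto intro: semigroup_gen.zero)
  next
    case (Suc N)
    show ?case
    proof (intro allI impI)
      fix x assume h: "int (Suc N) * a \<le> x \<and> x \<le> int (Suc N) * (a + b)"
      define g where "g = min (a+b) (x - int N * a)"
      have e1: "int (Suc N) * a = int N * a + a" by (simp add: algebra_simps)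
      have e2: "int (Suc N) * (a+b) = int N * a + int N * b + a + b" by (simp add: algebra_simps)
      have e3: "int N * (a+b) = int N * a + int N * b" by (simp add: algebra_simps)
      have nb: "0 \<le> int N * b" using assms(2) by simp
      have h': "int N * a + a \<le> x \<and> x \<le> int N * a + int N * b + a + b"
        using h unfolding e1 e2 .
      have g1: "g \<in> {a..a+b}" using h' nb assms unfolding g_def min_def by auto
      have "int N * a \<le> x - g \<and> x - g \<le> int N * a + int N * b"
        using h' nb assms unfolding g_def min_def by auto
      then have "int N * a \<le> x - g \<and> x - g \<le> int N * (a+b)" unfolding e3 .
      then have g2: "x - g \<in> semigroup_gen {a..a+b}" using Suc.IH by blast
      have "g + (x - g) \<in> semigroup_gen {a..a+b}" by (rule semigroup_gen.add[OF g1 g2])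
      then show "x \<in> semigroup_gen {a..a+b}" by simp
    qed
  qed
  moreover obtain N where "n = int N" using assms(5) nonneg_int_cases by blast
  ultimately show ?thesis using assms by blast
qed

lemma S_out:
  fixes a b x :: int
  assumes "x \<in> semigroup_gen {a..a+b}"
  shows "\<exists>n\<ge>0. n*a \<le> x \<and> x \<le> n*(a+b)"
  using assms
proof (induction rule: semigroup_gen.induct)
  case zero show ?case by (intro exI[of _ 0]) simp
next
  case (add g x)
  then obtain n where "0\<le>n" "n*a \<le> x" "x \<le> n*(a+b)" by blast
  then show ?case using add.hyps(1) by (intro exI[of _ "n+1"]) (auto simp: algebra_simps)
qed

lemma S_char:
  fixes a b x :: int
  assumes "0 \<le> a" "0 \<le> b"
  shows "x \<in> semigroup_gen {a..a+b} \<longleftrightarrow> (\<exists>n\<ge>0. n*a \<le> x \<and> x \<le> n*(a+b))"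
  using S_in[OF assms] S_out by blast

theorem lemma4p4:
  fixes a b m :: int and t :: nat and i :: "nat \<Rightarrow> int"
  assumes "0 < b" and "b < a"
    and "S = semigroup_gen {a..a+b}"
    and "m \<ge> 2 * conductor S - 1"
    and "i 0 = 0"
    and "\<And>j. j \<le> t \<Longrightarrow> i j < i (Suc j)"
    and "i (Suc t) < a + b"
    and "amenable S ((\<lambda>j. m + i j) ` {0..Suc t})"
  shows "Dset S ((\<lambda>j. m + i j) ` {0..Suc t}) =
           Dset S ((\<lambda>j. m + i j) ` {0..t}) \<union>
           {m - (k * a + r) | k r. a - i (Suc t) \<le> r \<and> r \<le> a - 1 - i t \<and>
                0 < r - k * b \<and> r - k * b \<le> (a + b) - i (Suc t)}"
proof -
  have a0: "0 \<le> a" and b0: "0 \<le> b" using assms by auto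
  have Sc: "x \<in> S \<longleftrightarrow> (\<exists>n\<ge>0. n*a \<le> x \<and> x \<le> n*(a+b))" for x
    using S_char[OF a0 b0] assms(3) by simp
  have Sin: "x \<in> S" if "n*a \<le> x" "x \<le> n*(a+b)" "0 \<le> n" for x n
    using Sc that by blast
  have Sge0: "0 \<le> x" if "x \<in> S" for x
    using Sc that a0 by (meson mult_nonneg_nonneg order_trans)
  define c where "c = conductor S"
  define P where "P = (\<lambda>c. c \<in> S \<and> (\<forall>n::nat. c + int n \<in> S))"
  have bigS: "y \<in> S" if "a*a \<le> y" for y
  proof -
    have q: "y div a * a + y mod a = y" by simp
    have r: "0 \<le> y mod a" "y mod a < a" using assms by auto
    have "a * a div a \<le> y div a" using that zdiv_mono1[of "a*a" y a] assms by simp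
    then have ya: "a \<le> y div a" using assms by simp
    have "a * b \<le> y div a * b" using ya b0 by (simp add: mult_right_mono)
    moreover have "a \<le> a * b" using assms by simp
    moreover have "y div a * (a+b) = y div a * a + y div a * b" by (simp add: algebra_simps)
    ultimately have "y \<le> y div a * (a+b)" using q r by linarith
    moreover have "y div a * a \<le> y" using q r by linarith
    moreover have "0 \<le> y div a" using ya assms by simp
    ultimately show ?thesis using Sin by blast
  qed
  have "P (int (nat (a*a)))" unfolding P_def using bigS assms by auto
  define n0 where "n0 = (LEAST n::nat. P (int n))"
  have Pn0: "P (int n0)" unfolding n0_def by (rule LeastI) fact
  have n0le: "int n0 \<le> y" if "P y" for y
  proof -
    have "0 \<le> y" using that Sge0 unfolding P_def by blast
    then have "y = int (nat y)" by simp
    with that have "P (int (nat y))" by simp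
    then have "n0 \<le> nat y" unfolding n0_def by (rule Least_le)
    then show ?thesis using \<open>0 \<le> y\<close> by simp
  qed
  have "conductor S = int n0" unfolding conductor_def
    by (rule Least_equality) (use Pn0 n0le in \<open>auto simp: P_def\<close>)
  then have cP: "P c" using Pn0 c_def by simp
  have cin: "y \<in> S" if "c \<le> y" for y
  proof -
    have "y = c + int (nat (y - c))" using that by simp
    then show ?thesis using cP unfolding P_def by metis
  qed
  have cgt: "y < c" if "y \<notin> S" for y using cin that by (meson not_le)
  have "a - 1 \<notin> S"
  proof
    assume "a - 1 \<in> S"
    then obtain n where n: "0 \<le> n" "n*a \<le> a - 1" "a - 1 \<le> n*(a+b)" using Sc by blast
    show False
    proof (cases "n \<ge> 1")
      case True
      then have "1*a \<le> n*a" using a0 by (intro mult_right_mono) auto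
      then show False using n by simp
    next
      case False
      then have "n = 0" using n by simp
      then show False using n assms by simp
    qed
  qed
  then have ca: "a \<le> c" using cgt by force
  have mc: "c \<le> m" using ca assms(1,2,4) c_def by simp
  have mono: "\<forall>j'. j' < j \<longrightarrow> j \<le> Suc t \<longrightarrow> i j' < i j" for j
  proof (induction j)
    case 0 then show ?case by simp
  next
    case (Suc j)
    show ?case
    proof (intro allI impI)
      fix j' assume h: "j' < Suc j" "Suc j \<le> Suc t"
      then have st: "i j < i (Suc j)" using assms(6) by simp
      show "i j' < i (Suc j)"
      proof (cases "j' = j")
        case True then show ?thesis using st by simp
      next
        case False then have "i j' < i j" using Suc.IH h by simp
        then show ?thesis using st by simp
      qed
    qed
  qed
  have ipos: "0 \<le> i j" if "j \<le> Suc t" for j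
  proof (cases "j = 0")
    case True then show ?thesis using assms(5) by simp
  next
    case False then show ?thesis using mono[of j] that assms(5) by fastforce
  qed
  have itlt: "i t < i (Suc t)" using assms(6) by simp
  have it0: "0 \<le> i t" using ipos by simp
  define M where "M = (\<lambda>j. m + i j) ` {0..Suc t}"
  have minM: "Min M = m"
  proof (rule Min_eqI)
    show "finite M" unfolding M_def by simp
    show "m \<le> y" if "y \<in> M" for y using that ipos unfolding M_def by force
    show "m \<in> M" unfolding M_def using assms(5) by force
  qed
  have am: "\<exists>j'\<le>Suc t. \<alpha>' = m + i j'"
    if "j \<le> Suc t" "\<alpha>' \<in> Dv S (m + i j)" "m \<le> \<alpha>'" for j \<alpha>'
  proof -
    have "m + i j \<in> M" unfolding M_def using that by force
    then have "Dv S (m + i j) \<inter> {Min M..} \<subseteq> M" using assms(8) unfolding amenable_def M_def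
      by blast
    then have "\<alpha>' \<in> M" using that minM by auto
    then show ?thesis unfolding M_def by auto
  qed
  have DsetI: "\<alpha> \<in> Dset S ((\<lambda>j. m + i j) ` A) \<longleftrightarrow> (\<exists>j\<in>A. \<alpha> \<in> Dv S (m + i j))" for \<alpha> A
    unfolding Dset_def by blast
  have zS: "0 \<in> S" using assms(3) semigroup_gen.zero by simp
  show ?thesis
  proof (intro equalityI subsetI)
    fix \<alpha> assume "\<alpha> \<in> Dset S ((\<lambda>j. m + i j) ` {0..Suc t})"
    then obtain j where j: "j \<le> Suc t" "\<alpha> \<in> Dv S (m + i j)" using DsetI by auto
    show "\<alpha> \<in> Dset S ((\<lambda>j. m + i j) ` {0..t}) \<union>
           {m - (k * a + r) | k r. a - i (Suc t) \<le> r \<and> r \<le> a - 1 - i t \<and>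
                0 < r - k * b \<and> r - k * b \<le> (a + b) - i (Suc t)}"
    proof (cases "\<exists>j\<le>t. \<alpha> \<in> Dv S (m + i j)")
      case True then show ?thesis using DsetI by auto
    next
      case False
      then have nD: "\<And>j. j \<le> t \<Longrightarrow> \<alpha> \<notin> Dv S (m + i j)" by blast
      have jt: "j = Suc t" using j nD by (metis le_SucE)
      have \<alpha>S: "\<alpha> \<in> S" and \<beta>S: "m + i (Suc t) - \<alpha> \<in> S" using j jt unfolding Dv_def by auto
      have "\<exists>k r. \<alpha> = m - (k * a + r) \<and> a - i (Suc t) \<le> r \<and> r \<le> a - 1 - i t \<and>
                0 < r - k * b \<and> r - k * b \<le> (a + b) - i (Suc t)"
      proof (cases "m \<le> \<alpha>")
        case True
        then obtain j' where j': "j' \<le> Suc t" "\<alpha> = m + i j'" using am j by blast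
        have "j' = Suc t"
        proof (rule ccontr)
          assume "j' \<noteq> Suc t"
          then have "j' \<le> t" using j' by simp
          moreover have "\<alpha> \<in> Dv S (m + i j')" using \<alpha>S zS j' unfolding Dv_def by simp
          ultimately show False using nD by blast
        qed
        then show ?thesis using j' itlt assms(7)
          by (intro exI[of _ "-1"] exI[of _ "a - i (Suc t)"]) auto
      next
        case False
        define x where "x = m - \<alpha>"
        have x1: "1 \<le> x" using False x_def by simp
        have xS: "x \<notin> S" using nD[of 0] \<alpha>S assms(5) unfolding Dv_def x_def by auto
        have xt: "x + i t \<notin> S" using nD[of t] \<alpha>S unfolding Dv_def x_def by (auto simp: algebra_simps)
        have "x + i (Suc t) \<in> S" proof - have "x + i (Suc t) = m + i (Suc t) - \<alpha>" using x_def by simp then show ?thesis using \<beta>S by metis qed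
        then obtain n where n: "0 \<le> n" "n*a \<le> x + i (Suc t)" "x + i (Suc t) \<le> n*(a+b)"
          using Sc by blast
        have lt: "x + i t < n * a"
        proof (rule ccontr)
          assume "\<not> x + i t < n * a"
          then have "x + i t \<in> S" using Sin[of n "x + i t"] n itlt by simp
          then show False using xt by simp
        qed
        have d1: "n*a = (n-1)*a + a" by (simp add: algebra_simps)
        have d2: "n*(a+b) = (n-1)*a + (n-1)*b + a + b" by (simp add: algebra_simps)
        have pos: "0 < (x - (n-1)*a) - (n-1)*b"
        proof (rule ccontr)
          assume h: "\<not> 0 < (x - (n-1)*a) - (n-1)*b"
          have n1: "1 \<le> n"
          proof (rule ccontr)
            assume "\<not> 1 \<le> n" then have "n = 0" using n by simp
            then show False using n x1 ipos[of "Suc t"] by simp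
          qed
          have d3: "(n-1)*(a+b) = (n-1)*a + (n-1)*b" by (simp add: algebra_simps)
          have xl: "x < (n-1)*a"
          proof (rule ccontr)
            assume "\<not> x < (n-1)*a"
            then have "x \<in> S" using Sin[of "n-1" x] n1 h d3 by simp
            then show False using xS by simp
          qed
          define u where "u = (n-1)*a - x"
          define e where "e = x + i (Suc t) - (n-1)*a"
          have ea: "a \<le> e" "e \<le> a + b" "0 < e" using n d1 xl assms(7) x1 assms(2) unfolding e_def
            by linarith+
          have eS: "e \<in> S" using Sin[of 1 e] ea by simp
          have "m + u \<in> Dv S (m + i (Suc t))"
            unfolding Dv_def using cin[of "m+u"] mc eS xl unfolding u_def e_def
            by (auto simp: algebra_simps)
          then obtain j' where j': "j' \<le> Suc t" "m + u = m + i j'" using am[of "Suc t"] xl u_def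
            by force
          have "j' \<noteq> Suc t" using j' ea u_def e_def by auto
          then have jt': "j' \<le> t" using j' by simp
          have b1: "0 \<le> (n-1)*b" using n1 b0 by simp
          have "(n-1)*a \<in> S" using Sin[of "n-1" "(n-1)*a"] n1 d3 b1 by simp
          moreover have "m + i j' - \<alpha> = (n-1)*a" using j' unfolding u_def x_def by simp
          ultimately have "\<alpha> \<in> Dv S (m + i j')" using \<alpha>S unfolding Dv_def by simp
          then show False using nD jt' by blast
        qed
        show ?thesis
        proof -
          have f1: "a - i (Suc t) \<le> x - (n-1)*a" using n(2) d1 by linarith
          have f2: "x - (n-1)*a \<le> a - 1 - i t" using lt d1 by linarith
          have f3: "(x - (n-1)*a) - (n-1)*b \<le> (a + b) - i (Suc t)" using n(3) d2 by linarith
          have f4: "\<alpha> = m - ((n-1)*a + (x - (n-1)*a))" using x_def by simp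
          show ?thesis using f1 f2 f3 f4 pos by blast
        qed
      qed
      then show ?thesis by blast
    qed
  next
    fix \<alpha> assume h: "\<alpha> \<in> Dset S ((\<lambda>j. m + i j) ` {0..t}) \<union>
           {m - (k * a + r) | k r. a - i (Suc t) \<le> r \<and> r \<le> a - 1 - i t \<and>
                0 < r - k * b \<and> r - k * b \<le> (a + b) - i (Suc t)}"
    show "\<alpha> \<in> Dset S ((\<lambda>j. m + i j) ` {0..Suc t})"
    proof (cases "\<alpha> \<in> Dset S ((\<lambda>j. m + i j) ` {0..t})")
      case True then show ?thesis using DsetI by auto
    next
      case False
      then obtain k r where kr: "\<alpha> = m - (k * a + r)" "a - i (Suc t) \<le> r" "r \<le> a - 1 - i t"
         "0 < r - k * b" "r - k * b \<le> (a + b) - i (Suc t)" using h by blast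
      have km: "-1 \<le> k"
      proof (rule ccontr)
        assume "\<not> -1 \<le> k"
        then have "2*b \<le> (-k)*b" using b0 by (intro mult_right_mono) auto
        then show False using kr assms(1) by simp
      qed
      have e1: "(k+1)*a = k*a + a" by (simp add: algebra_simps)
      have e2: "(k+1)*(a+b) = k*a + k*b + a + b" by (simp add: algebra_simps)
      have diffS: "m + i (Suc t) - \<alpha> \<in> S"
      proof -
        have "(k+1)*a \<le> m + i (Suc t) - \<alpha>" unfolding e1 using kr by linarith
        moreover have "m + i (Suc t) - \<alpha> \<le> (k+1)*(a+b)" unfolding e2 using kr by linarith
        ultimately show ?thesis using Sin[of "k+1" "m + i (Suc t) - \<alpha>"] km by simp
      qed
      have \<alpha>S: "\<alpha> \<in> S"
      proof (cases "k = -1")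
        case True
        then show ?thesis using kr it0 mc cin by simp
      next
        case False
        then have k0: "0 \<le> k" using km by simp
        have yS: "(k+1)*a - 1 \<notin> S"
        proof
          assume "(k+1)*a - 1 \<in> S"
          then obtain n where n: "0 \<le> n" "n*a \<le> (k+1)*a - 1" "(k+1)*a - 1 \<le> n*(a+b)"
            using Sc by blast
          show False
          proof (cases "k+1 \<le> n")
            case True
            then have "(k+1)*a \<le> n*a" using a0 by (intro mult_right_mono) auto
            then show False using n by simp
          next
            case False
            then have "n*(a+b) \<le> k*(a+b)" using a0 b0 by (intro mult_right_mono) auto
            then show False using n kr it0 e1 by (simp add: algebra_simps)
          qed
        qed
        have "(k+1)*a - 1 < c" using cgt yS by blast
        then have "c \<le> \<alpha>" using kr it0 e1 assms(4) c_def by simp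
        then show ?thesis using cin by blast
      qed
      have "\<alpha> \<in> Dv S (m + i (Suc t))" using \<alpha>S diffS unfolding Dv_def by simp
      then show ?thesis using DsetI by auto
    qed
  qed
qed

end
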